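(* Let $\mathcal X,\mathcal Y$ be nonempty convex compact sets and $\mathcal L:\mathcal X\times\mathcal Y\to\mathbb R$ a differentiable $(\mu_{\mathcal X},\mu_{\mathcal Y})$-uniformly strongly convex-concave function with saddle point $(x^*,y^* )$. Then for every $z\in\mathcal X\times\mathcal Y$, $$h(z)\le P_{\mathcal L}\sqrt{2w(z)},\qquad\text{and}\qquad P_{\mathcal L}\le\sqrt2\sup_{z\in\mathcal X\times\mathcal Y}\max\left\{\frac{\|\nabla_x\mathcal L(z)\|_{\mathcal X^*}}{\sqrt{\mu_{\mathcal X}}},\frac{\|\nabla_y\mathcal L(z)\|_{\mathcal Y^*}}{\sqrt{\mu_{\mathcal Y}}}\right\}.$$
   Context: Norms $\|\cdot\|_{\mathcal X},\|\cdot\|_{\mathcal Y}$ with dual norms $\|\cdot\|_{\mathcal X^*},\|\cdot\|_{\mathcal Y^*}$. $(\mu_{\mathcal X},\mu_{\mathcal Y})$-uniformly strongly convex-concave ($\mu_{\mathcal X},\mu_{\mathcal Y}>0$): $\mathcal L(\cdot,y)$ is $\mu_{\mathcal X}$-strongly convex w.r.t. $\|\cdot\|_{\mathcal X}$ for every $y$ and $-\mathcal L(x,\cdot)$ is $\mu_{\mathcal Y}$-strongly convex w.r.t. $\|\cdot\|_{\mathcal Y}$ for every $x$. Saddle point: $\mathcal L(x^*,y)\le\mathcal L(x^*,y^* )\le\mathcal L(x,y^* )$ for all $x,y$; $\mathcal L^*:=\mathcal L(x^*,y^* )$. For $z=(x,y)$: $h(z):=\max_{y'}\mathcal L(x,y')-\min_{x'}\mathcal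 L(x',y)$, $w(z):=\mathcal L(x,y^* )-\mathcal L(x^*,y)$. With $\hat y(x):=\arg\max_{y}\mathcal L(x,y)$ and $\hat x(y):=\arg\min_x\mathcal L(x,y)$: $P_{\mathcal X}:=\sup_{x\ne x^*}\frac{\langle\nabla_x\mathcal L(x,\hat y(x)),x-x^*\rangle}{\sqrt{\mathcal L(x,y^* )-\mathcal L^*}}$, $P_{\mathcal Y}:=\sup_{y\ne y^*}\frac{\langle\nabla_y\mathcal L(\hat x(y),y),y^*-y\rangle}{\sqrt{\mathcal L^*-\mathcal L(x^*,y)}}$, $P_{\mathcal L}:=\max\{P_{\mathcal X},P_{\mathcal Y}\}$. *)

theory Defs
  imports "HOL-Analysis.Analysis"
begin

definition is_norm :: "('a::euclidean_space \<Rightarrow> real) \<Rightarrow> bool" where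
  "is_norm N \<longleftrightarrow> (\<forall>u. 0 \<le> N u) \<and> (\<forall>u. N u = 0 \<longleftrightarrow> u = 0)
     \<and> (\<forall>c u. N (c *\<^sub>R u) = \<bar>c\<bar> * N u) \<and> (\<forall>u v. N (u + v) \<le> N u + N v)"

text \<open>Dual norm, the dual space being identified with the space via the inner product.\<close>
definition dual_norm :: "('a::euclidean_space \<Rightarrow> real) \<Rightarrow> 'a \<Rightarrow> real" where
  "dual_norm N g = Sup {g \<bullet> u | u. N u \<le> 1}"

definition strongly_convex_on ::
  "'a::euclidean_space set \<Rightarrow> ('a \<Rightarrow> real) \<Rightarrow> real \<Rightarrow> ('a \<Rightarrow> real) \<Rightarrow> bool" where
  "strongly_convex_on S N \<mu> f \<longleftrightarrow>
     (\<forall>x1\<in>S. \<forall>x2\<in>S. \<forall>t::real. 0 \<le> t \<and> t \<le> 1 \<longrightarrow>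
        f (t *\<^sub>R x1 + (1 - t) *\<^sub>R x2)
          \<le> t * f x1 + (1 - t) * f x2 - \<mu> / 2 * t * (1 - t) * (N (x1 - x2))\<^sup>2)"

definition yhat :: "'b set \<Rightarrow> ('a \<Rightarrow> 'b \<Rightarrow> real) \<Rightarrow> 'a \<Rightarrow> 'b" where
  "yhat Y L x = (THE y. y \<in> Y \<and> (\<forall>y'\<in>Y. L x y' \<le> L x y))"

definition xhat :: "'a set \<Rightarrow> ('a \<Rightarrow> 'b \<Rightarrow> real) \<Rightarrow> 'b \<Rightarrow> 'a" where
  "xhat X L y = (THE x. x \<in> X \<and> (\<forall>x'\<in>X. L x y \<le> L x' y))"

definition gap_h :: "'a set \<Rightarrow> 'b set \<Rightarrow> ('a \<Rightarrow> 'b \<Rightarrow> real) \<Rightarrow> 'a \<Rightarrow> 'b \<Rightarrow> real" where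
  "gap_h X Y L x y = (SUP y'\<in>Y. L x y') - (INF x'\<in>X. L x' y)"

definition gap_w :: "('a \<Rightarrow> 'b \<Rightarrow> real) \<Rightarrow> 'a \<Rightarrow> 'b \<Rightarrow> 'a \<Rightarrow> 'b \<Rightarrow> real" where
  "gap_w L xs ys x y = L x ys - L xs y"

text \<open>The constants \<open>P_X\<close>, \<open>P_Y\<close>, \<open>P_L\<close> (as extended reals; suprema may be infinite).
  \<open>Gx x y\<close>, \<open>Gy x y\<close> are the partial gradients \<open>\<nabla>\<^sub>xL(x,y)\<close>, \<open>\<nabla>\<^sub>yL(x,y)\<close>.\<close>
definition P_X :: "'a::euclidean_space set \<Rightarrow> 'b set \<Rightarrow> ('a \<Rightarrow> 'b \<Rightarrow> real)
    \<Rightarrow> ('a \<Rightarrow> 'b \<Rightarrow> 'a) \<Rightarrow> 'a \<Rightarrow> 'b \<Rightarrow> ereal" where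
  "P_X X Y L Gx xs ys = (SUP x\<in>X - {xs}.
      ereal ((Gx x (yhat Y L x) \<bullet> (x - xs)) / sqrt (L x ys - L xs ys)))"

definition P_Y :: "'a set \<Rightarrow> 'b::euclidean_space set \<Rightarrow> ('a \<Rightarrow> 'b \<Rightarrow> real)
    \<Rightarrow> ('a \<Rightarrow> 'b \<Rightarrow> 'b) \<Rightarrow> 'a \<Rightarrow> 'b \<Rightarrow> ereal" where
  "P_Y X Y L Gy xs ys = (SUP y\<in>Y - {ys}.
      ereal ((Gy (xhat X L y) y \<bullet> (ys - y)) / sqrt (L xs ys - L xs y)))"

definition P_L :: "'a::euclidean_space set \<Rightarrow> 'b::euclidean_space set \<Rightarrow> ('a \<Rightarrow> 'b \<Rightarrow> real)
    \<Rightarrow> ('a \<Rightarrow> 'b \<Rightarrow> 'a) \<Rightarrow> ('a \<Rightarrow> 'b \<Rightarrow> 'b) \<Rightarrow> 'a \<Rightarrow> 'b \<Rightarrow> ereal" where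
  "P_L X Y L Gx Gy xs ys = max (P_X X Y L Gx xs ys) (P_Y X Y L Gy xs ys)"

end

theory Submission imports Defs begin


lemma scD:
  assumes "strongly_convex_on S N \<mu> f" "x1 \<in> S" "x2 \<in> S" "0 \<le> t" "t \<le> 1"
  shows "f (t *\<^sub>R x1 + (1 - t) *\<^sub>R x2)
          \<le> t * f x1 + (1 - t) * f x2 - \<mu> / 2 * t * (1 - t) * (N (x1 - x2))\<^sup>2"
  using assms unfolding strongly_convex_on_def by blast

lemma first_order:
  fixes f :: "'a::euclidean_space \<Rightarrow> real"
  assumes sc: "strongly_convex_on S N \<mu> f" and mu: "\<mu> \<ge> 0" and x: "x \<in> S" and z: "z \<in> S"
    and d: "(f has_derivative (\<lambda>k. g \<bullet> k)) (at x)"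
  shows "f x - f z \<le> g \<bullet> (x - z)"
proof -
  define v where "v = z - x"
  define \<phi> where "\<phi> t = f (x + t *\<^sub>R v)" for t :: real
  have d1: "((\<lambda>t::real. x + t *\<^sub>R v) has_derivative (\<lambda>t. t *\<^sub>R v)) (at 0)"
    by (auto intro!: derivative_eq_intros)
  have d2: "(f has_derivative (\<lambda>k. g \<bullet> k)) (at (x + 0 *\<^sub>R v))" using d by simp
  have "(\<phi> has_derivative (\<lambda>t. g \<bullet> (t *\<^sub>R v))) (at 0)"
    unfolding \<phi>_def using diff_chain_at[OF d1 d2] by (simp add: o_def)
  hence "(\<phi> has_derivative (\<lambda>t. (g \<bullet> v) * t)) (at 0)"
    by (simp add: mult.commute)
  hence "(\<phi> has_field_derivative (g \<bullet> v)) (at 0)"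
    by (simp add: has_field_derivative_def)
  hence lim: "((\<lambda>h. (\<phi> (0 + h) - \<phi> 0) / h) \<longlongrightarrow> g \<bullet> v) (at 0)"
    by (simp add: DERIV_def)
  hence lim': "((\<lambda>h. (\<phi> (0 + h) - \<phi> 0) / h) \<longlongrightarrow> g \<bullet> v) (at_right 0)"
    using lim by (simp add: filterlim_at_split)
  have ev: "eventually (\<lambda>h. (\<phi> (0 + h) - \<phi> 0) / h \<le> f z - f x) (at_right (0::real))"
    unfolding eventually_at_right_field
  proof (intro exI[of _ 1] conjI allI impI)
    fix t :: real assume t0: "0 < t" and t1: "t < 1"
    hence t: "0 < t \<and> t < 1" by simp
    have eq: "x + t *\<^sub>R v = t *\<^sub>R z + (1 - t) *\<^sub>R x"
      by (simp add: v_def algebra_simps)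
    have "\<phi> t \<le> t * f z + (1 - t) * f x - \<mu> / 2 * t * (1 - t) * (N (z - x))\<^sup>2"
      unfolding \<phi>_def eq using scD[OF sc z x, of t] t by auto
    also have "\<dots> \<le> t * f z + (1 - t) * f x"
      using t mu by (simp add: mult_nonneg_nonneg)
    finally have "\<phi> t - \<phi> 0 \<le> t * (f z - f x)"
      by (simp add: \<phi>_def algebra_simps)
    thus "(\<phi> (0 + t) - \<phi> 0) / t \<le> f z - f x"
      using t by (simp add: divide_le_eq mult.commute)
  qed simp
  have "g \<bullet> v \<le> f z - f x"
    by (rule tendsto_le[OF trivial_limit_at_right_real tendsto_const lim' ev])
  thus ?thesis by (simp add: v_def inner_diff_right)
qed

lemma min_growth:
  fixes f :: "'a::euclidean_space \<Rightarrow> real"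
  assumes sc: "strongly_convex_on S N \<mu> f" and cv: "convex S" and x: "x \<in> S" and xs: "xs \<in> S"
    and mn: "\<And>z. z \<in> S \<Longrightarrow> f xs \<le> f z"
  shows "\<mu> / 2 * (N (x - xs))\<^sup>2 \<le> f x - f xs"
proof -
  define c where "c = \<mu> / 2 * (N (x - xs))\<^sup>2"
  have ev: "eventually (\<lambda>t. c - (f x - f xs) \<le> t * c) (at_right (0::real))"
    unfolding eventually_at_right_field
  proof (intro exI[of _ 1] conjI allI impI)
    fix t :: real assume t0: "0 < t" and t1: "t < 1"
    hence t: "0 < t \<and> t < 1" by simp
    have "t *\<^sub>R x + (1 - t) *\<^sub>R xs \<in> S"
      using cv x xs t by (simp add: convex_def)
    hence "f xs \<le> f (t *\<^sub>R x + (1 - t) *\<^sub>R xs)" by (rule mn)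
    also have "\<dots> \<le> t * f x + (1 - t) * f xs - \<mu> / 2 * t * (1 - t) * (N (x - xs))\<^sup>2"
      using scD[OF sc x xs, of t] t by auto
    finally have A: "f xs \<le> t * f x + (1 - t) * f xs - \<mu> / 2 * t * (1 - t) * (N (x - xs))\<^sup>2" .
    have "t * (c - (f x - f xs)) - t * (t * c) = 
       f xs - (t * f x + (1 - t) * f xs - \<mu> / 2 * t * (1 - t) * (N (x - xs))\<^sup>2)"
      by (simp add: c_def field_simps)
    hence "t * (c - (f x - f xs)) \<le> t * (t * c)" using A by linarith
    thus "c - (f x - f xs) \<le> t * c" using t by simp
  qed simp
  have lim: "((\<lambda>t. t * c) \<longlongrightarrow> 0 * c) (at_right (0::real))"
    by (intro tendsto_intros)
  have "c - (f x - f xs) \<le> 0 * c"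
    by (rule tendsto_le[OF trivial_limit_at_right_real lim tendsto_const ev])
  thus ?thesis by (simp add: c_def)
qed



lemma is_normD:
  assumes "is_norm N"
  shows "N u \<ge> 0" "N u = 0 \<longleftrightarrow> u = 0" "N (c *\<^sub>R u) = \<bar>c\<bar> * N u" "N (u + v) \<le> N u + N v"
  using assms unfolding is_norm_def by blast+

lemma norm_N_sum:
  assumes "is_norm N" "finite A"
  shows "N (sum f A) \<le> (\<Sum>i\<in>A. N (f i))"
  using assms(2)
proof induction
  case empty
  then show ?case using is_normD(2)[OF assms(1), of 0] by simp
next
  case (insert x F)
  then show ?case using is_normD(4)[OF assms(1), of "f x" "sum f F"] by simp
qed

lemma norm_N_minus: assumes "is_norm N" shows "N (u - v) = N (v - u)"
proof -
  have "N (v - u) = N ((-1) *\<^sub>R (u - v))" by simp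
  also have "\<dots> = N (u - v)" using is_normD(3)[OF assms, of "-1" "u - v"] by simp
  finally show ?thesis by simp
qed

lemma N_upper:
  fixes N :: "'a::euclidean_space \<Rightarrow> real"
  assumes "is_norm N"
  shows "\<exists>M\<ge>0. \<forall>u. N u \<le> M * norm u"
proof -
  define M where "M = (\<Sum>b\<in>Basis. N b)"
  have M0: "M \<ge> 0" unfolding M_def by (intro sum_nonneg is_normD(1)[OF assms])
  have "N u \<le> M * norm u" for u
  proof -
    have "N u = N (\<Sum>b\<in>Basis. (u \<bullet> b) *\<^sub>R b)" by (simp add: euclidean_representation)
    also have "\<dots> \<le> (\<Sum>b\<in>Basis. N ((u \<bullet> b) *\<^sub>R b))" by (rule norm_N_sum[OF assms]) simp
    also have "\<dots> = (\<Sum>b\<in>Basis. \<bar>u \<bullet> b\<bar> * N b)" using is_normD(3)[OF assms] by simp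
    also have "\<dots> \<le> (\<Sum>b\<in>Basis. norm u * N b)"
      by (intro sum_mono mult_right_mono is_normD(1)[OF assms]) (simp add: Basis_le_norm)
    also have "\<dots> = M * norm u" by (simp add: M_def sum_distrib_left mult.commute)
    finally show ?thesis .
  qed
  with M0 show ?thesis by blast
qed

lemma N_cont:
  fixes N :: "'a::euclidean_space \<Rightarrow> real"
  assumes "is_norm N"
  shows "continuous_on S N"
proof -
  obtain M where M: "M \<ge> 0" "\<And>u. N u \<le> M * norm u" using N_upper[OF assms] by blast
  have L: "\<bar>N u - N v\<bar> \<le> M * norm (u - v)" for u v
  proof -
    have "N u \<le> N v + N (u - v)" using is_normD(4)[OF assms, of v "u - v"] by simp
    moreover have "N v \<le> N u + N (v - u)" using is_normD(4)[OF assms, of u "v - u"] by simp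
    moreover have "N (v - u) = N (u - v)" using norm_N_minus[OF assms] by simp
    ultimately show ?thesis using M(2)[of "u - v"] by linarith
  qed
  show ?thesis unfolding continuous_on_iff
  proof (intro ballI allI impI)
    fix x e assume "x \<in> S" "(0::real) < e"
    show "\<exists>d>0. \<forall>x'\<in>S. dist x' x < d \<longrightarrow> dist (N x') (N x) < e"
    proof (intro exI[of _ "e / (M + 1)"] conjI ballI impI)
      show "0 < e / (M + 1)" using \<open>0 < e\<close> M by simp
      fix x' assume "x' \<in> S" "dist x' x < e / (M + 1)"
      hence "(M + 1) * norm (x' - x) < e" using M by (simp add: dist_norm field_simps)
      moreover have "M * norm (x' - x) \<le> (M + 1) * norm (x' - x)" by (simp add: algebra_simps)
      ultimately show "dist (N x') (N x) < e" using L[of x' x] by (simp add: dist_real_def)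
    qed
  qed
qed

lemma N_lower:
  fixes N :: "'a::euclidean_space \<Rightarrow> real"
  assumes N: "is_norm N"
  shows "\<exists>c>0. \<forall>u. c * norm u \<le> N u"
proof -
  obtain b :: 'a where b: "b \<in> Basis" using nonempty_Basis by blast
  have ne: "sphere (0::'a) 1 \<noteq> {}" using b by (auto simp: norm_Basis)
  obtain u0 where u0: "u0 \<in> sphere 0 1" "\<And>u. u \<in> sphere 0 1 \<Longrightarrow> N u0 \<le> N u"
    using continuous_attains_inf[OF compact_sphere ne N_cont[OF N]] by blast
  have "u0 \<noteq> 0" using u0(1) by auto
  hence c: "N u0 > 0" using is_normD(1,2)[OF N, of u0] by auto
  have "N u0 * norm u \<le> N u" for u
  proof (cases "u = 0")
    case True thus ?thesis using is_normD(2)[OF N, of 0] by simp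
  next
    case False
    have "(1 / norm u) *\<^sub>R u \<in> sphere 0 1" using False by simp
    hence "N u0 \<le> N ((1 / norm u) *\<^sub>R u)" by (rule u0(2))
    also have "\<dots> = N u / norm u" using is_normD(3)[OF N] by simp
    finally show ?thesis using False by (simp add: field_simps)
  qed
  with c show ?thesis by blast
qed

lemma dual_norm_props:
  fixes N :: "'a::euclidean_space \<Rightarrow> real"
  assumes N: "is_norm N"
  shows "dual_norm N g \<ge> 0" "g \<bullet> u \<le> dual_norm N g * N u"
proof -
  obtain c where c: "c > 0" "\<And>u. c * norm u \<le> N u" using N_lower[OF N] by blast
  let ?S = "{g \<bullet> u | u. N u \<le> 1}"
  have bdd: "bdd_above ?S"
  proof (rule bdd_aboveI)
    fix r assume "r \<in> ?S"
    then obtain u where u: "r = g \<bullet> u" "N u \<le> 1" by blast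
    have "norm u \<le> 1 / c" using c(2)[of u] u(2) c(1) by (simp add: field_simps)
    hence "norm g * norm u \<le> norm g * (1 / c)" by (rule mult_left_mono) simp
    thus "r \<le> norm g / c" using u(1) Cauchy_Schwarz_ineq2[of g u] by simp
  qed
  have mem: "N u \<le> 1 \<Longrightarrow> g \<bullet> u \<le> dual_norm N g" for u
    unfolding dual_norm_def by (rule cSup_upper[OF _ bdd]) blast
  show d0: "dual_norm N g \<ge> 0" using mem[of 0] is_normD(2)[OF N, of 0] by simp
  show "g \<bullet> u \<le> dual_norm N g * N u"
  proof (cases "u = 0")
    case True thus ?thesis using d0 is_normD(2)[OF N, of 0] by simp
  next
    case False
    hence pos: "N u > 0" using is_normD(1,2)[OF N, of u] by auto
    have "N ((1 / N u) *\<^sub>R u) = 1" using is_normD(3)[OF N] pos by simp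
    hence "g \<bullet> ((1 / N u) *\<^sub>R u) \<le> dual_norm N g" by (intro mem) simp
    thus ?thesis using pos is_normD(3)[OF N] by (simp add: field_simps inner_scaleR_right)
  qed
qed

lemma argmin_ex1:
  fixes f :: "'a::euclidean_space \<Rightarrow> real"
  assumes sc: "strongly_convex_on S N \<mu> f" and N: "is_norm N" and mu: "\<mu> > 0"
    and cv: "convex S" and cp: "compact S" and ne: "S \<noteq> {}" and ct: "continuous_on S f"
  shows "\<exists>!x. x \<in> S \<and> (\<forall>x'\<in>S. f x \<le> f x')"
proof -
  obtain x0 where x0: "x0 \<in> S" "\<And>x'. x' \<in> S \<Longrightarrow> f x0 \<le> f x'"
    using continuous_attains_inf[OF cp ne ct] by blast
  have uniq: "x1 = x2" if 1: "x1 \<in> S" "\<forall>x'\<in>S. f x1 \<le> f x'" and 2: "x2 \<in> S" "\<forall>x'\<in>S. f x2 \<le> f x'" for x1 x2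
  proof (rule ccontr)
    assume ne: "x1 \<noteq> x2"
    hence "N (x1 - x2) > 0" using is_normD(1,2)[OF N, of "x1 - x2"] by auto
    hence p: "\<mu> / 2 * (1/2) * (1 - 1/2) * (N (x1 - x2))\<^sup>2 > 0" using mu by simp
    have m: "(1/2::real) *\<^sub>R x1 + (1 - 1/2) *\<^sub>R x2 \<in> S" using cv 1 2 by (simp add: convex_def)
    have "f ((1/2::real) *\<^sub>R x1 + (1 - 1/2) *\<^sub>R x2)
       \<le> 1/2 * f x1 + (1 - 1/2) * f x2 - \<mu> / 2 * (1/2) * (1 - 1/2) * (N (x1 - x2))\<^sup>2"
      by (rule scD[OF sc 1(1) 2(1)]) auto
    moreover have "f x1 \<le> f x2" "f x2 \<le> f x1" using 1 2 by auto
    moreover have "f x1 \<le> f ((1/2::real) *\<^sub>R x1 + (1 - 1/2) *\<^sub>R x2)" using 1(2) m by blast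
    ultimately show False using p by simp
  qed
  show ?thesis using x0 uniq by blast
qed



lemma partial_x:
  assumes "((\<lambda>p. L (fst p) (snd p)) has_derivative
          (\<lambda>h. Gx x y \<bullet> fst h + Gy x y \<bullet> snd h)) (at (x, y))"
  shows "((\<lambda>x'. L x' y) has_derivative (\<lambda>k. Gx x y \<bullet> k)) (at x)"
proof -
  have d1: "((\<lambda>x'. (x', y)) has_derivative (\<lambda>k. (k, 0))) (at x)"
    by (auto intro!: derivative_eq_intros)
  have "((\<lambda>p. L (fst p) (snd p)) \<circ> (\<lambda>x'. (x', y)) has_derivative
        (\<lambda>h. Gx x y \<bullet> fst h + Gy x y \<bullet> snd h) \<circ> (\<lambda>k. (k, 0))) (at x)"
    by (rule diff_chain_at[OF d1]) (simp add: assms)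
  thus ?thesis by (simp add: o_def)
qed

lemma partial_y:
  assumes "((\<lambda>p. L (fst p) (snd p)) has_derivative
          (\<lambda>h. Gx x y \<bullet> fst h + Gy x y \<bullet> snd h)) (at (x, y))"
  shows "((\<lambda>y'. - L x y') has_derivative (\<lambda>k. (- Gy x y) \<bullet> k)) (at y)"
proof -
  have d1: "((\<lambda>y'. (x, y')) has_derivative (\<lambda>k. (0, k))) (at y)"
    by (auto intro!: derivative_eq_intros)
  have "((\<lambda>p. L (fst p) (snd p)) \<circ> (\<lambda>y'. (x, y')) has_derivative
        (\<lambda>h. Gx x y \<bullet> fst h + Gy x y \<bullet> snd h) \<circ> (\<lambda>k. (0, k))) (at y)"
    by (rule diff_chain_at[OF d1]) (simp add: assms)
  hence "((\<lambda>y'. L x y') has_derivative (\<lambda>k. Gy x y \<bullet> k)) (at y)" by (simp add: o_def)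
  from has_derivative_minus[OF this] show ?thesis by simp
qed

lemma cont_x:
  assumes "((\<lambda>p. L (fst p) (snd p)) has_derivative D) (at (x, y))"
  shows "isCont (\<lambda>x'. L x' y) x"
proof -
  have "isCont (\<lambda>p. L (fst p) (snd p)) ((\<lambda>x'. (x', y)) x)" using has_derivative_continuous[OF assms] by simp
  from isCont_o2[where f="\<lambda>x'. (x', y)" and a=x, OF _ this] show ?thesis by (simp add: o_def)
qed

lemma cont_y:
  assumes "((\<lambda>p. L (fst p) (snd p)) has_derivative D) (at (x, y))"
  shows "isCont (\<lambda>y'. L x y') y"
proof -
  have "isCont (\<lambda>p. L (fst p) (snd p)) ((\<lambda>y'. (x, y')) y)" using has_derivative_continuous[OF assms] by simp
  from isCont_o2[where f="\<lambda>y'. (x, y')" and a=y, OF _ this] show ?thesis by (simp add: o_def)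
qed



lemma sqrt_sum_le:
  fixes a b :: real assumes "a \<ge> 0" "b \<ge> 0"
  shows "sqrt a + sqrt b \<le> sqrt (2 * (a + b))"
proof (rule real_le_rsqrt)
  have "0 \<le> (sqrt a - sqrt b)\<^sup>2" by simp
  hence "2 * (sqrt a * sqrt b) \<le> (sqrt a)\<^sup>2 + (sqrt b)\<^sup>2" by (simp add: power2_eq_square algebra_simps)
  thus "(sqrt a + sqrt b)\<^sup>2 \<le> 2 * (a + b)" using assms by (simp add: power2_sum)
qed

theorem proposition15:
  fixes X :: "'a::euclidean_space set" and Y :: "'b::euclidean_space set"
    and NX :: "'a \<Rightarrow> real" and NY :: "'b \<Rightarrow> real"
    and L :: "'a \<Rightarrow> 'b \<Rightarrow> real"
    and Gx :: "'a \<Rightarrow> 'b \<Rightarrow> 'a" and Gy :: "'a \<Rightarrow> 'b \<Rightarrow> 'b"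
    and \<mu>X \<mu>Y :: real and xs :: 'a and ys :: 'b
  assumes "X \<noteq> {}" "convex X" "compact X"
    and "Y \<noteq> {}" "convex Y" "compact Y"
    and "is_norm NX" "is_norm NY"
    and "\<mu>X > 0" "\<mu>Y > 0"
    and diff: "\<And>x y. x \<in> X \<Longrightarrow> y \<in> Y \<Longrightarrow>
        ((\<lambda>p. L (fst p) (snd p)) has_derivative
          (\<lambda>h. Gx x y \<bullet> fst h + Gy x y \<bullet> snd h)) (at (x, y))"
    and "\<And>y. y \<in> Y \<Longrightarrow> strongly_convex_on X NX \<mu>X (\<lambda>x. L x y)"
    and "\<And>x. x \<in> X \<Longrightarrow> strongly_convex_on Y NY \<mu>Y (\<lambda>y. - L x y)"
    and "xs \<in> X" "ys \<in> Y"
    and "\<And>x y. x \<in> X \<Longrightarrow> y \<in> Y \<Longrightarrow> L xs y \<le> L xs ys \<and> L xs ys \<le> L x ys"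
  shows "(\<forall>x\<in>X. \<forall>y\<in>Y. ereal (gap_h X Y L x y)
            \<le> P_L X Y L Gx Gy xs ys * ereal (sqrt (2 * gap_w L xs ys x y)))
       \<and> P_L X Y L Gx Gy xs ys \<le> ereal (sqrt 2) *
          (SUP z\<in>X \<times> Y. ereal (max (dual_norm NX (Gx (fst z) (snd z)) / sqrt \<mu>X)
                                     (dual_norm NY (Gy (fst z) (snd z)) / sqrt \<mu>Y)))"
proof -
  note A = assms
  define Ls where "Ls = L xs ys"
  let ?yh = "yhat Y L" and ?xh = "xhat X L"
  define M where "M z = max (dual_norm NX (Gx (fst z) (snd z)) / sqrt \<mu>X)
                                     (dual_norm NY (Gy (fst z) (snd z)) / sqrt \<mu>Y)" for z
  define rX where "rX x = (Gx x (?yh x) \<bullet> (x - xs)) / sqrt (L x ys - L xs ys)" for x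
  define rY where "rY y = (Gy (?xh y) y \<bullet> (ys - y)) / sqrt (L xs ys - L xs y)" for y
  have PX: "P_X X Y L Gx xs ys = (SUP x\<in>X - {xs}. ereal (rX x))" by (simp add: P_X_def rX_def)
  have PY: "P_Y X Y L Gy xs ys = (SUP y\<in>Y - {ys}. ereal (rY y))" by (simp add: P_Y_def rY_def)
  have sad1: "L xs y \<le> Ls" if "y \<in> Y" for y using A(16)[OF A(14) that] by (simp add: Ls_def)
  have sad2: "Ls \<le> L x ys" if "x \<in> X" for x using A(16)[OF that A(15)] by (simp add: Ls_def)
  have yh: "?yh x \<in> Y \<and> (\<forall>y'\<in>Y. L x y' \<le> L x (?yh x))" if x: "x \<in> X" for x
  proof -
    have ct: "continuous_on Y (\<lambda>y. - L x y)"
      using cont_y[where L=L, OF diff[OF x]] by (intro continuous_at_imp_continuous_on continuous_minus) auto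
    have "\<exists>!y. y \<in> Y \<and> (\<forall>y'\<in>Y. - L x y \<le> - L x y')"
      by (rule argmin_ex1[OF A(13)[OF x] A(8) A(10) A(5) A(6) A(4) ct])
    hence "\<exists>!y. y \<in> Y \<and> (\<forall>y'\<in>Y. L x y' \<le> L x y)" by simp
    from theI'[OF this] show ?thesis by (simp add: yhat_def)
  qed
  have xh: "?xh y \<in> X \<and> (\<forall>x'\<in>X. L (?xh y) y \<le> L x' y)" if y: "y \<in> Y" for y
  proof -
    have ct: "continuous_on X (\<lambda>x. L x y)"
      using cont_x[where L=L, OF diff[OF _ y]] by (intro continuous_at_imp_continuous_on) auto
    have "\<exists>!x. x \<in> X \<and> (\<forall>x'\<in>X. L x y \<le> L x' y)"
      by (rule argmin_ex1[OF A(12)[OF y] A(7) A(9) A(2) A(3) A(1) ct])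
    from theI'[OF this] show ?thesis by (simp add: xhat_def)
  qed
  have KX: "L x (?yh x) - Ls \<le> Gx x (?yh x) \<bullet> (x - xs)" if x: "x \<in> X" for x
  proof -
    have y: "?yh x \<in> Y" using yh[OF x] by blast
    have "L x (?yh x) - L xs (?yh x) \<le> Gx x (?yh x) \<bullet> (x - xs)"
      using first_order[OF A(12)[OF y] _ x A(14) partial_x[where L=L and Gx=Gx and Gy=Gy, OF diff[OF x y]]] A(9) by simp
    thus ?thesis using sad1[OF y] by simp
  qed
  have KY: "Ls - L (?xh y) y \<le> Gy (?xh y) y \<bullet> (ys - y)" if y: "y \<in> Y" for y
  proof -
    have x: "?xh y \<in> X" using xh[OF y] by blast
    have "- L (?xh y) y - - L (?xh y) ys \<le> (- Gy (?xh y) y) \<bullet> (y - ys)"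
      using first_order[OF A(13)[OF x] _ y A(15) partial_y[where L=L and Gx=Gx and Gy=Gy, OF diff[OF x y]]] A(10) by simp
    hence "L (?xh y) ys - L (?xh y) y \<le> Gy (?xh y) y \<bullet> (ys - y)"
      by (simp add: inner_diff_right)
    thus ?thesis using sad2[OF x] by simp
  qed
  have GX: "\<mu>X / 2 * (NX (x - xs))\<^sup>2 \<le> L x ys - Ls" if x: "x \<in> X" for x
    using min_growth[OF A(12)[OF A(15)] A(2) x A(14)] sad2 by (simp add: Ls_def)
  have GY: "\<mu>Y / 2 * (NY (y - ys))\<^sup>2 \<le> Ls - L xs y" if y: "y \<in> Y" for y
    using min_growth[OF A(13)[OF A(14)] A(5) y A(15)] sad1 by (simp add: Ls_def)
  have nX: "NX (x - xs) > 0" if "x \<noteq> xs" for x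
    using is_normD(1,2)[OF A(7), of "x - xs"] that by auto
  have nY: "NY (y - ys) > 0" if "y \<noteq> ys" for y
    using is_normD(1,2)[OF A(8), of "y - ys"] that by auto
  have posX: "L x ys - Ls > 0" if "x \<in> X" "x \<noteq> xs" for x
  proof -
    have "\<mu>X / 2 * (NX (x - xs))\<^sup>2 > 0" using nX[OF that(2)] A(9) by simp
    thus ?thesis using GX[OF that(1)] by linarith
  qed
  have posY: "Ls - L xs y > 0" if "y \<in> Y" "y \<noteq> ys" for y
  proof -
    have "\<mu>Y / 2 * (NY (y - ys))\<^sup>2 > 0" using nY[OF that(2)] A(10) by simp
    thus ?thesis using GY[OF that(1)] by linarith
  qed
  have RX1: "L x (?yh x) - Ls \<le> rX x * sqrt (L x ys - Ls)" if "x \<in> X" "x \<noteq> xs" for x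
    using KX[OF that(1)] posX[OF that] by (simp add: rX_def Ls_def)
  have RY1: "Ls - L (?xh y) y \<le> rY y * sqrt (Ls - L xs y)" if "y \<in> Y" "y \<noteq> ys" for y
    using KY[OF that(1)] posY[OF that] by (simp add: rY_def Ls_def)
  have RX2: "rX x > 0" if "x \<in> X" "x \<noteq> xs" for x
  proof -
    have "L x ys \<le> L x (?yh x)" using yh[OF that(1)] A(15) by blast
    hence "Gx x (?yh x) \<bullet> (x - xs) > 0" using KX[OF that(1)] posX[OF that] by linarith
    thus ?thesis using posX[OF that] by (simp add: rX_def Ls_def)
  qed
  have RY2: "rY y > 0" if "y \<in> Y" "y \<noteq> ys" for y
  proof -
    have "L (?xh y) y \<le> L xs y" using xh[OF that(1)] A(14) by blast
    hence "Gy (?xh y) y \<bullet> (ys - y) > 0" using KY[OF that(1)] posY[OF that] by linarith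
    thus ?thesis using posY[OF that] by (simp add: rY_def Ls_def)
  qed
  have ratio: "num / sqrt a \<le> sqrt 2 * (d / sqrt \<mu>)"
    if "num \<le> d * n" "\<mu> / 2 * n\<^sup>2 \<le> a" "n > 0" "\<mu> > 0" "d \<ge> 0" for num d n a \<mu> :: real
  proof -
    have s: "sqrt (\<mu> / 2) * n \<le> sqrt a"
    proof -
      have "sqrt (\<mu> / 2 * n\<^sup>2) \<le> sqrt a" using that(2) by (rule real_sqrt_le_mono)
      moreover have "sqrt (\<mu> / 2 * n\<^sup>2) = sqrt (\<mu> / 2) * n"
        using that(3) by (simp only: real_sqrt_mult real_sqrt_abs abs_of_pos)
      ultimately show ?thesis by linarith
    qed
    have sp: "sqrt (\<mu> / 2) * n > 0" using that by simp
    have sa: "0 \<le> sqrt a" using sp s by linarith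
    have sa': "0 < sqrt a" using sp s by linarith
    have "num / sqrt a \<le> d * n / sqrt a" using that(1) sa by (rule divide_right_mono)
    also have "\<dots> \<le> d * n / (sqrt (\<mu> / 2) * n)"
      using that by (intro divide_left_mono[OF s _ mult_pos_pos[OF sa' sp]]) simp
    also have "\<dots> = sqrt 2 * (d / sqrt \<mu>)"
      using that(3,4) by (simp add: real_sqrt_divide field_simps)
    finally show ?thesis .
  qed
  have RX3: "rX x \<le> sqrt 2 * M (x, ?yh x)" if "x \<in> X" "x \<noteq> xs" for x
  proof -
    have "rX x \<le> sqrt 2 * (dual_norm NX (Gx x (?yh x)) / sqrt \<mu>X)"
      unfolding rX_def
      by (rule ratio[OF dual_norm_props(2)[OF A(7)] GX[OF that(1), unfolded Ls_def]
               nX[OF that(2)] A(9) dual_norm_props(1)[OF A(7)]])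
    also have "\<dots> \<le> sqrt 2 * M (x, ?yh x)"
      unfolding M_def fst_conv snd_conv by (rule mult_left_mono) auto
    finally show ?thesis .
  qed
  have RY3: "rY y \<le> sqrt 2 * M (?xh y, y)" if "y \<in> Y" "y \<noteq> ys" for y
  proof -
    have e: "NY (ys - y) = NY (y - ys)" by (rule norm_N_minus[OF A(8)])
    have "rY y \<le> sqrt 2 * (dual_norm NY (Gy (?xh y) y) / sqrt \<mu>Y)"
      unfolding rY_def
      by (rule ratio[OF dual_norm_props(2)[OF A(8)] GY[OF that(1), unfolded Ls_def, folded e]
               nY[OF that(2), folded e] A(10) dual_norm_props(1)[OF A(8)]])
    also have "\<dots> \<le> sqrt 2 * M (?xh y, y)"
      unfolding M_def fst_conv snd_conv by (rule mult_left_mono) auto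
    finally show ?thesis .
  qed
  define S where "S = (SUP z\<in>X \<times> Y. ereal (M z))"
  have MS: "ereal (sqrt 2 * M z) \<le> ereal (sqrt 2) * S" if "z \<in> X \<times> Y" for z
  proof -
    have "ereal (M z) \<le> S" unfolding S_def using that by (rule SUP_upper)
    hence "ereal (sqrt 2) * ereal (M z) \<le> ereal (sqrt 2) * S"
      by (rule ereal_mult_left_mono) simp
    thus ?thesis by simp
  qed
  have part2X: "P_X X Y L Gx xs ys \<le> ereal (sqrt 2) * S"
    unfolding PX
  proof (rule SUP_least)
    fix x assume "x \<in> X - {xs}"
    hence x: "x \<in> X" "x \<noteq> xs" by auto
    have "ereal (rX x) \<le> ereal (sqrt 2 * M (x, ?yh x))" using RX3[OF x] by simp
    also have "\<dots> \<le> ereal (sqrt 2) * S" using MS yh[OF x(1)] x(1) by blast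
    finally show "ereal (rX x) \<le> ereal (sqrt 2) * S" .
  qed
  have part2Y: "P_Y X Y L Gy xs ys \<le> ereal (sqrt 2) * S"
    unfolding PY
  proof (rule SUP_least)
    fix y assume "y \<in> Y - {ys}"
    hence y: "y \<in> Y" "y \<noteq> ys" by auto
    have "ereal (rY y) \<le> ereal (sqrt 2 * M (?xh y, y))" using RY3[OF y] by simp
    also have "\<dots> \<le> ereal (sqrt 2) * S" using MS xh[OF y(1)] y(1) by blast
    finally show "ereal (rY y) \<le> ereal (sqrt 2) * S" .
  qed
  have part2: "P_L X Y L Gx Gy xs ys \<le> ereal (sqrt 2) * S"
    unfolding P_L_def using part2X part2Y by simp
  have part1: "ereal (gap_h X Y L x y)
            \<le> P_L X Y L Gx Gy xs ys * ereal (sqrt (2 * gap_w L xs ys x y))"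
    if x: "x \<in> X" and y: "y \<in> Y" for x y
  proof -
    define a where "a = L x ys - Ls"
    define b where "b = Ls - L xs y"
    define P where "P = P_L X Y L Gx Gy xs ys"
    have a0: "a \<ge> 0" using sad2[OF x] by (simp add: a_def)
    have b0: "b \<ge> 0" using sad1[OF y] by (simp add: b_def)
    have w: "gap_w L xs ys x y = a + b" by (simp add: gap_w_def a_def b_def)
    have hle: "gap_h X Y L x y \<le> (L x (?yh x) - Ls) + (Ls - L (?xh y) y)"
    proof -
      have "(SUP y'\<in>Y. L x y') \<le> L x (?yh x)" using yh[OF x] by (intro cSUP_least A(4)) auto
      moreover have "L (?xh y) y \<le> (INF x'\<in>X. L x' y)" using xh[OF y] by (intro cINF_greatest A(1)) auto
      ultimately show ?thesis by (simp add: gap_h_def)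
    qed
    have Ale0: "L xs (?yh xs) - Ls \<le> 0" using sad1 yh[OF A(14)] by auto
    have Ble0: "Ls - L (?xh ys) ys \<le> 0" using sad2 xh[OF A(15)] by auto
    have ax: "a = 0 \<longleftrightarrow> x = xs" using posX[OF x] unfolding a_def by (cases "x = xs") (auto simp: Ls_def)
    have by': "b = 0 \<longleftrightarrow> y = ys" using posY[OF y] unfolding b_def by (cases "y = ys") (auto simp: Ls_def)
    have PXle: "ereal (rX x) \<le> P" if "x \<noteq> xs"
    proof -
      have "ereal (rX x) \<le> P_X X Y L Gx xs ys" unfolding PX using x that by (intro SUP_upper) auto
      thus ?thesis unfolding P_def P_L_def by (rule max.coboundedI1)
    qed
    have PYle: "ereal (rY y) \<le> P" if "y \<noteq> ys"
    proof -
      have "ereal (rY y) \<le> P_Y X Y L Gy xs ys" unfolding PY using y that by (intro SUP_upper) auto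
      thus ?thesis unfolding P_def P_L_def by (rule max.coboundedI2)
    qed
    show ?thesis
    proof (cases "a = 0 \<and> b = 0")
      case True
      hence "x = xs" "y = ys" using ax by' by auto
      hence "gap_h X Y L x y \<le> 0" using hle Ale0 Ble0 by simp
      moreover have "P_L X Y L Gx Gy xs ys * ereal 0 = 0"
        by (cases "P_L X Y L Gx Gy xs ys") (simp_all add: zero_ereal_def)
      ultimately show ?thesis using True w by (simp add: zero_ereal_def)
    next
      case False
      have P0: "P \<ge> 0"
      proof (cases "a = 0")
        case True
        hence "y \<noteq> ys" using False by' by auto
        thus ?thesis using PYle RY2[OF y] by (meson ereal_less_eq(5) less_imp_le order_trans)
      next
        case False
        hence "x \<noteq> xs" using ax by auto
        thus ?thesis using PXle RX2[OF x] by (meson ereal_less_eq(5) less_imp_le order_trans)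
      qed
      have spos: "sqrt (2 * (a + b)) > 0" using False a0 b0 by auto
      show ?thesis unfolding P_def[symmetric] w
      proof (cases P)
        case (real p)
        have p0: "p \<ge> 0" using P0 real by simp
        have Ap: "L x (?yh x) - Ls \<le> p * sqrt a"
        proof (cases "x = xs")
          case True thus ?thesis using Ale0 ax by simp
        next
          case False
          have "rX x \<le> p" using PXle[OF False] real by simp
          hence "rX x * sqrt a \<le> p * sqrt a" by (rule mult_right_mono) (simp add: a0 b0)
          thus ?thesis using RX1[OF x False] by (simp add: a_def)
        qed
        have Bp: "Ls - L (?xh y) y \<le> p * sqrt b"
        proof (cases "y = ys")
          case True thus ?thesis using Ble0 by' by simp
        next
          case False
          have "rY y \<le> p" using PYle[OF False] real by simp
          hence "rY y * sqrt b \<le> p * sqrt b" by (rule mult_right_mono) (simp add: a0 b0)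
          thus ?thesis using RY1[OF y False] by (simp add: b_def)
        qed
        have "p * (sqrt a + sqrt b) \<le> p * sqrt (2 * (a + b))"
          by (rule mult_left_mono[OF sqrt_sum_le[OF a0 b0] p0])
        hence "gap_h X Y L x y \<le> p * sqrt (2 * (a + b))"
          using hle Ap Bp by (simp add: algebra_simps)
        thus "ereal (gap_h X Y L x y) \<le> P * ereal (sqrt (2 * (a + b)))" using real by simp
      next
        case PInf
        thus "ereal (gap_h X Y L x y) \<le> P * ereal (sqrt (2 * (a + b)))" using spos by simp
      next
        case MInf
        thus "ereal (gap_h X Y L x y) \<le> P * ereal (sqrt (2 * (a + b)))" using P0 by simp
      qed
    qed
  qed
  show ?thesis using part1 part2 unfolding S_def M_def by blast
qed


end
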